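(* For all types $A$ and $B$, if $A \equiv B$, then $A \simeq B$.
   Context: Types and rows share one grammar: $A,B,C,\rho ::= X \mid \alpha \mid \star \mid \iota \mid A\to B \mid \forall X{:}K.\,A \mid [\rho] \mid \langle\rho\rangle \mid \cdot \mid \ell{:}A;\rho$, where $X$ ranges over type variables (bound by $\forall$), $\alpha$ over type names, $\star$ is the dynamic type (also serving as the dynamic row), $\iota$ over base types, $[\rho]$ and $\langle\rho\rangle$ are record and variant types, $\cdot$ is the empty row, $\ell$ ranges over labels, and $K\in\{\mathsf T,\mathsf R\}$ is a kind. Types are identified up to renaming of bound variables; $\mathit{ftv}(A)$ is the set of free type variables. Row matching $\rho \triangleright_\ell A,\rho'$ is defined by: $(\ell{:}A;\rho)\triangleright_\ell A,\rho$; if $\ell'\neq\ell$ and $\rho\triangleright_\ell A,\rho'$ then $(\ell'{:}B;\rho)\triangleright_\ell A,(\ell'{:}B;\rho')$; and $\star\triangleright_\ell \star,\star$. $\mathbf{QPoly}(A)$ holds iff $A$ is not of the form $\forall X{:}K.\,B$ and $\star$ occurs in $A$. Type equivalence $\equiv$ is the least equivalence relation that is a congruence for $\to$, $\forall X{:}K.\,-$, $[-]$, $\langle-\rangle$ and $\ell{:}-;-$, and contains $\ell{:}A;\ell'{:}B;\rho \equiv \ell'{:}B;\ell{:}A;\rho$ whenever $\ell\neq\ell'$. Consistency $\simeq$ is defined inductively: $A\simeq A$; $\star\simeq A$; $A\simeq\star$; $A_1\to A_2\simeq B_1\to B_2$ if $A_1\simeq B_1$ and $A_2\simeq B_2$;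 $\forall X{:}K.A\simeq\forall X{:}K.B$ if $A\simeq B$; $\forall X{:}K.A\simeq B$ if $\mathbf{QPoly}(B)$, $X\notin\mathit{ftv}(B)$ and $A\simeq B$; $A\simeq\forall X{:}K.B$ if $\mathbf{QPoly}(A)$, $X\notin\mathit{ftv}(A)$ and $A\simeq B$; $[\rho_1]\simeq[\rho_2]$ and $\langle\rho_1\rangle\simeq\langle\rho_2\rangle$ if $\rho_1\simeq\rho_2$; $\ell{:}A;\rho_1\simeq B$ if $B\triangleright_\ell B',\rho_2$, $A\simeq B'$ and $\rho_1\simeq\rho_2$; $A\simeq \ell{:}B;\rho_2$ if $A\triangleright_\ell A',\rho_1$, $A'\simeq B$ and $\rho_1\simeq\rho_2$. *)

theory Defs
  imports Main
begin

datatype kind = KT | KR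

(* Types and rows share one grammar. Bound type variables X use de Bruijn indices
   (so types are identified up to renaming of bound variables by construction). *)
datatype ty =
    TVar nat
  | TName nat
  | Dyn                 (* star: dynamic type / dynamic row *)
  | Base nat
  | Fun ty ty
  | All kind ty
  | Rcd ty
  | Vnt ty
  | Empty
  | Ext nat ty ty

fun lift :: "nat \<Rightarrow> ty \<Rightarrow> ty" where
  "lift k (TVar i) = (if i < k then TVar i else TVar (Suc i))"
| "lift k (TName a) = TName a"
| "lift k Dyn = Dyn"
| "lift k (Base b) = Base b"
| "lift k (Fun A B) = Fun (lift k A) (lift k B)"
| "lift k (All K A) = All K (lift (Suc k) A)"
| "lift k (Rcd r) = Rcd (lift k r)"
| "lift k (Vnt r) = Vnt (lift k r)"
| "lift k Empty = Empty"
| "lift k (Ext l A r) = Ext l (lift k A) (lift k r)"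

fun has_dyn :: "ty \<Rightarrow> bool" where
  "has_dyn (TVar i) = False"
| "has_dyn (TName a) = False"
| "has_dyn Dyn = True"
| "has_dyn (Base b) = False"
| "has_dyn (Fun A B) = (has_dyn A \<or> has_dyn B)"
| "has_dyn (All K A) = has_dyn A"
| "has_dyn (Rcd r) = has_dyn r"
| "has_dyn (Vnt r) = has_dyn r"
| "has_dyn Empty = False"
| "has_dyn (Ext l A r) = (has_dyn A \<or> has_dyn r)"

definition QPoly :: "ty \<Rightarrow> bool" where
  "QPoly A \<longleftrightarrow> (\<forall>K B. A \<noteq> All K B) \<and> has_dyn A"

inductive row_match :: "ty \<Rightarrow> nat \<Rightarrow> ty \<Rightarrow> ty \<Rightarrow> bool" where
  rm_head: "row_match (Ext l A r) l A r"
| rm_skip: "l' \<noteq> l \<Longrightarrow> row_match r l A r' \<Longrightarrow> row_match (Ext l' B r) l A (Ext l' B r')"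
| rm_dyn: "row_match Dyn l Dyn Dyn"

inductive ty_equiv :: "ty \<Rightarrow> ty \<Rightarrow> bool" (infix "\<equiv>\<^sub>t" 50) where
  eq_refl: "A \<equiv>\<^sub>t A"
| eq_sym: "A \<equiv>\<^sub>t B \<Longrightarrow> B \<equiv>\<^sub>t A"
| eq_trans: "A \<equiv>\<^sub>t B \<Longrightarrow> B \<equiv>\<^sub>t C \<Longrightarrow> A \<equiv>\<^sub>t C"
| eq_fun: "A1 \<equiv>\<^sub>t B1 \<Longrightarrow> A2 \<equiv>\<^sub>t B2 \<Longrightarrow> Fun A1 A2 \<equiv>\<^sub>t Fun B1 B2"
| eq_all: "A \<equiv>\<^sub>t B \<Longrightarrow> All K A \<equiv>\<^sub>t All K B"
| eq_rcd: "A \<equiv>\<^sub>t B \<Longrightarrow> Rcd A \<equiv>\<^sub>t Rcd B"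
| eq_vnt: "A \<equiv>\<^sub>t B \<Longrightarrow> Vnt A \<equiv>\<^sub>t Vnt B"
| eq_ext: "A \<equiv>\<^sub>t B \<Longrightarrow> r1 \<equiv>\<^sub>t r2 \<Longrightarrow> Ext l A r1 \<equiv>\<^sub>t Ext l B r2"
| eq_swap: "l \<noteq> l' \<Longrightarrow> Ext l A (Ext l' B r) \<equiv>\<^sub>t Ext l' B (Ext l A r)"

(* consistency; the side condition X \<notin> ftv(B) together with A \<simeq> B is rendered
   in de Bruijn form by comparing the body A with B lifted past the new binder *)
inductive consistent :: "ty \<Rightarrow> ty \<Rightarrow> bool" (infix "\<simeq>" 50) where
  c_refl: "A \<simeq> A"
| c_dynL: "Dyn \<simeq> A"
| c_dynR: "A \<simeq> Dyn"
| c_fun: "A1 \<simeq> B1 \<Longrightarrow> A2 \<simeq> B2 \<Longrightarrow> Fun A1 A2 \<simeq> Fun B1 B2"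
| c_all: "A \<simeq> B \<Longrightarrow> All K A \<simeq> All K B"
| c_allL: "QPoly B \<Longrightarrow> A \<simeq> lift 0 B \<Longrightarrow> All K A \<simeq> B"
| c_allR: "QPoly A \<Longrightarrow> lift 0 A \<simeq> B \<Longrightarrow> A \<simeq> All K B"
| c_rcd: "r1 \<simeq> r2 \<Longrightarrow> Rcd r1 \<simeq> Rcd r2"
| c_vnt: "r1 \<simeq> r2 \<Longrightarrow> Vnt r1 \<simeq> Vnt r2"
| c_extL: "row_match B l B' r2 \<Longrightarrow> A \<simeq> B' \<Longrightarrow> r1 \<simeq> r2 \<Longrightarrow> Ext l A r1 \<simeq> B"
| c_extR: "row_match A l A' r1 \<Longrightarrow> A' \<simeq> B \<Longrightarrow> r1 \<simeq> r2 \<Longrightarrow> A \<simeq> Ext l B r2"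

end

theory Submission
  imports Defs
begin

fun sh :: "ty \<Rightarrow> ty \<Rightarrow> bool" where
  "sh (Fun a1 a2) B = (\<exists>b1 b2. B = Fun b1 b2 \<and> a1 \<equiv>\<^sub>t b1 \<and> a2 \<equiv>\<^sub>t b2)"
| "sh (All K a) B = (\<exists>b. B = All K b \<and> a \<equiv>\<^sub>t b)"
| "sh (Rcd a) B = (\<exists>b. B = Rcd b \<and> a \<equiv>\<^sub>t b)"
| "sh (Vnt a) B = (\<exists>b. B = Vnt b \<and> a \<equiv>\<^sub>t b)"
| "sh (Ext l a r) B = (\<exists>l' b r'. B = Ext l' b r')"
| "sh A B = (B = A)"

definition Q :: "ty \<Rightarrow> ty \<Rightarrow> bool" where
  "Q A B \<longleftrightarrow> (\<forall>l x r'. row_match A l x r' \<longrightarrow>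
      (\<exists>c r''. row_match B l c r'' \<and> x \<equiv>\<^sub>t c \<and> r' \<equiv>\<^sub>t r''))"

lemma sh_refl: "sh A A"
  by (cases A) (auto intro: eq_refl)

lemma sh_sym: "sh A B \<Longrightarrow> sh B A"
  by (cases A) (auto intro: eq_sym)

lemma sh_trans: "sh A B \<Longrightarrow> sh B C \<Longrightarrow> sh A C"
  by (cases A; auto; meson ty_equiv.eq_trans)

lemma Q_refl: "Q A A"
  unfolding Q_def by (auto intro: eq_refl)

lemma Q_trans: "Q A B \<Longrightarrow> Q B C \<Longrightarrow> Q A C"
  unfolding Q_def by (meson eq_trans)

lemma rm_inv_Fun: "row_match (Fun a b) l x r \<Longrightarrow> False"
  by (cases rule: row_match.cases) auto
lemma rm_inv_All: "row_match (All K a) l x r \<Longrightarrow> False"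
  by (cases rule: row_match.cases) auto
lemma rm_inv_Rcd: "row_match (Rcd a) l x r \<Longrightarrow> False"
  by (cases rule: row_match.cases) auto
lemma rm_inv_Vnt: "row_match (Vnt a) l x r \<Longrightarrow> False"
  by (cases rule: row_match.cases) auto

lemma rm_inv_Ext: "row_match (Ext l0 a r1) l x r' \<Longrightarrow>
   (l = l0 \<and> x = a \<and> r' = r1) \<or> (\<exists>r0. l0 \<noteq> l \<and> row_match r1 l x r0 \<and> r' = Ext l0 a r0)"
  by (cases rule: row_match.cases) auto

lemma Q_ext:
  assumes "a \<equiv>\<^sub>t b" "r1 \<equiv>\<^sub>t r2" "Q r1 r2"
  shows "Q (Ext l0 a r1) (Ext l0 b r2)"
  unfolding Q_def
proof (intro allI impI)
  fix l x r'
  assume "row_match (Ext l0 a r1) l x r'"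
  from rm_inv_Ext[OF this] show "\<exists>c r''. row_match (Ext l0 b r2) l c r'' \<and> x \<equiv>\<^sub>t c \<and> r' \<equiv>\<^sub>t r''"
  proof
    assume "l = l0 \<and> x = a \<and> r' = r1"
    thus ?thesis using assms by (auto intro: rm_head)
  next
    assume "\<exists>r0. l0 \<noteq> l \<and> row_match r1 l x r0 \<and> r' = Ext l0 a r0"
    then obtain r0 where h: "l0 \<noteq> l" "row_match r1 l x r0" "r' = Ext l0 a r0" by blast
    with assms(3) obtain c r'' where "row_match r2 l c r''" "x \<equiv>\<^sub>t c" "r0 \<equiv>\<^sub>t r''"
      unfolding Q_def by blast
    thus ?thesis using h assms by (auto intro!: rm_skip eq_ext)
  qed
qed

lemma Q_swap:
  assumes "l1 \<noteq> l2"
  shows "Q (Ext l1 a (Ext l2 b r)) (Ext l2 b (Ext l1 a r))"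
  unfolding Q_def
proof (intro allI impI)
  fix l x r'
  assume m: "row_match (Ext l1 a (Ext l2 b r)) l x r'"
  show "\<exists>c r''. row_match (Ext l2 b (Ext l1 a r)) l c r'' \<and> x \<equiv>\<^sub>t c \<and> r' \<equiv>\<^sub>t r''"
  proof (cases "l = l1")
    case True
    with m assms have "x = a" "r' = Ext l2 b r"
      using rm_inv_Ext[OF m] rm_inv_Ext by blast+
    then show ?thesis using True assms
      by (auto intro!: rm_skip rm_head eq_refl)
  next
    case False
    with rm_inv_Ext[OF m] obtain r0 where r0: "row_match (Ext l2 b r) l x r0" "r' = Ext l1 a r0"
      by auto
    show ?thesis
    proof (cases "l = l2")
      case True
      with rm_inv_Ext[OF r0(1)] have "x = b" "r0 = r" by auto
      then show ?thesis using True r0 by (auto intro!: rm_head eq_refl)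
    next
      case False2: False
      with rm_inv_Ext[OF r0(1)] obtain r00 where "row_match r l x r00" "r0 = Ext l2 b r00"
        by auto
      then show ?thesis using False False2 r0 assms
        by (auto intro!: rm_skip eq_refl eq_swap)
    qed
  qed
qed

lemma equiv_inv:
  "A \<equiv>\<^sub>t B \<Longrightarrow> sh A B \<and> sh B A \<and> Q A B \<and> Q B A"
proof (induction rule: ty_equiv.induct)
  case (eq_refl A)
  then show ?case using sh_refl Q_refl by blast
next
  case (eq_sym A B)
  then show ?case by blast
next
  case (eq_trans A B C)
  then show ?case using sh_trans Q_trans by blast
next
  case (eq_fun A1 B1 A2 B2)
  then show ?case unfolding Q_def
    by (auto dest: rm_inv_Fun intro: ty_equiv.eq_sym)
next
  case (eq_all A B K)
  then show ?case unfolding Q_def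
    by (auto dest: rm_inv_All intro: ty_equiv.eq_sym)
next
  case (eq_rcd A B)
  then show ?case unfolding Q_def
    by (auto dest: rm_inv_Rcd intro: ty_equiv.eq_sym)
next
  case (eq_vnt A B)
  then show ?case unfolding Q_def
    by (auto dest: rm_inv_Vnt intro: ty_equiv.eq_sym)
next
  case (eq_ext A B r1 r2 l)
  then show ?case using Q_ext ty_equiv.eq_sym by auto
next
  case (eq_swap l l' A B r)
  then show ?case using Q_swap by auto
qed

lemma main_aux: "A \<equiv>\<^sub>t B \<Longrightarrow> A \<simeq> B"
proof (induction A arbitrary: B)
  case (Ext l a r)
  from equiv_inv[OF Ext.prems] have "Q (Ext l a r) B" by blast
  then obtain c r'' where "row_match B l c r''" "a \<equiv>\<^sub>t c" "r \<equiv>\<^sub>t r''"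
    unfolding Q_def using rm_head by blast
  then show ?case using Ext.IH by (blast intro: c_extL)
next
  case (Fun a1 a2)
  from equiv_inv[OF Fun.prems] show ?case using Fun.IH by (auto intro: c_fun)
next
  case (All K a)
  from equiv_inv[OF All.prems] show ?case using All.IH by (auto intro: c_all)
next
  case (Rcd a)
  from equiv_inv[OF Rcd.prems] show ?case using Rcd.IH by (auto intro: c_rcd)
next
  case (Vnt a)
  from equiv_inv[OF Vnt.prems] show ?case using Vnt.IH by (auto intro: c_vnt)
qed (use equiv_inv c_refl in fastforce)+

theorem mainTheorem5:
  fixes A B :: ty
  assumes "A \<equiv>\<^sub>t B"
  shows "A \<simeq> B"
  using main_aux[OF assms] .

end
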